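(* Let $\beta,k\in\mathbb{R}$, $r>0$, and let $\gamma\in C^2([0,r])$ satisfy $-\gamma''-\beta|\gamma'|=k$ and $\gamma'>0$ in $(0,r)$. Let $\varepsilon>0$ and suppose that $r\ge2\varepsilon$ or $\gamma'(r)=0$. Then, with $r_1:=\min\{\varepsilon,r\}$ and $r_2:=\min\{2\varepsilon,r\}$, $$a^+_\varepsilon(\beta)\big(\gamma(r_1)-\gamma(0)\big)-a^-_\varepsilon(\beta)\big(\gamma(r_2)-\gamma(r_1)\big)\le\varepsilon k.$$
   Context: Coefficients: for $\beta\neq0$, $a^+_\varepsilon(\beta):=\frac{\beta}{e^{\varepsilon\beta}-1}$ and $a^-_\varepsilon(\beta):=\frac{\beta}{1-e^{-\varepsilon\beta}}$; for $\beta=0$, $a^+_\varepsilon(0):=a^-_\varepsilon(0):=1/\varepsilon$. *)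

theory Defs
  imports "HOL-Analysis.Analysis"
begin

definition a_plus :: "real \<Rightarrow> real \<Rightarrow> real" where
  "a_plus \<epsilon> \<beta> = (if \<beta> = 0 then 1 / \<epsilon> else \<beta> / (exp (\<epsilon> * \<beta>) - 1))"

definition a_minus :: "real \<Rightarrow> real \<Rightarrow> real" where
  "a_minus \<epsilon> \<beta> = (if \<beta> = 0 then 1 / \<epsilon> else \<beta> / (1 - exp (- \<epsilon> * \<beta>)))"

end

theory Submission
  imports Defs
begin

lemma lemma3p2_sol:
  fixes \<beta> k r :: real
    and \<gamma> \<gamma>' \<gamma>'' :: "real \<Rightarrow> real"
  assumes r_pos: "r > 0"
    and d1: "\<And>x. x \<in> {0..r} \<Longrightarrow> (\<gamma> has_real_derivative \<gamma>' x) (at x within {0..r})"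
    and d2: "\<And>x. x \<in> {0..r} \<Longrightarrow> (\<gamma>' has_real_derivative \<gamma>'' x) (at x within {0..r})"
    and ode: "\<And>x. x \<in> {0<..<r} \<Longrightarrow> - \<gamma>'' x - \<beta> * \<bar>\<gamma>' x\<bar> = k"
    and incr: "\<And>x. x \<in> {0<..<r} \<Longrightarrow> \<gamma>' x > 0"
    and b: "\<beta> \<noteq> 0"
  shows "\<forall>x\<in>{0..r}. \<gamma>' x = (\<gamma>' 0 + k/\<beta>) * exp (-\<beta>*x) - k/\<beta>
     \<and> \<gamma> x = \<gamma> 0 + (\<gamma>' 0 + k/\<beta>) * (1 - exp (-\<beta>*x))/\<beta> - k*x/\<beta>"
proof -
  define C where "C = \<gamma>' 0 + k/\<beta>"
  have g'c: "continuous_on {0..r} \<gamma>'" by (rule DERIV_continuous_on[OF d2])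
  have gc: "continuous_on {0..r} \<gamma>" by (rule DERIV_continuous_on[OF d1])
  have Dg': "(\<gamma>' has_real_derivative \<gamma>'' x) (at x)" if "0 < x" "x < r" for x
    using d2[of x] that at_within_Icc_at[of 0 x r] by auto
  have Dg: "(\<gamma> has_real_derivative \<gamma>' x) (at x)" if "0 < x" "x < r" for x
    using d1[of x] that at_within_Icc_at[of 0 x r] by auto
  have ode': "\<gamma>'' x = -k - \<beta> * \<gamma>' x" if "0 < x" "x < r" for x
    using ode[of x] incr[of x] that by auto
  define w where "w x = exp (\<beta>*x) * (\<gamma>' x + k/\<beta>)" for x
  have wc: "continuous_on {0..r} w" unfolding w_def
    by (intro continuous_intros g'c)
  have wd: "(w has_real_derivative 0) (at x)" if "0 < x" "x < r" for x
  proof -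
    have "(w has_real_derivative (exp (\<beta>*x) * \<beta> * (\<gamma>' x + k/\<beta>) + exp (\<beta>*x) * \<gamma>'' x)) (at x)"
      unfolding w_def by (auto intro!: derivative_eq_intros Dg'[OF that])
    moreover have "exp (\<beta>*x) * \<beta> * (\<gamma>' x + k/\<beta>) + exp (\<beta>*x) * \<gamma>'' x = 0"
    proof -
      have "exp (\<beta>*x) * \<beta> * (\<gamma>' x + k/\<beta>) + exp (\<beta>*x) * \<gamma>'' x
          = exp (\<beta>*x) * (\<beta> * \<gamma>' x + k + \<gamma>'' x)" using b by (simp add: algebra_simps)
      also have "\<beta> * \<gamma>' x + k + \<gamma>'' x = 0" using ode'[OF that] by simp
      finally show ?thesis by simp
    qed
    ultimately show ?thesis by simp
  qed
  have p: "\<gamma>' x = C * exp (-\<beta>*x) - k/\<beta>" if "x \<in> {0..r}" for x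
  proof -
    have "w x = w 0" by (rule DERIV_isconst2[OF r_pos wc wd]) (use that in auto)
    hence "exp (\<beta>*x) * (\<gamma>' x + k/\<beta>) = C" by (simp add: w_def C_def)
    hence "exp (-\<beta>*x) * (exp (\<beta>*x) * (\<gamma>' x + k/\<beta>)) = exp (-\<beta>*x) * C" by simp
    hence "\<gamma>' x + k/\<beta> = exp (-\<beta>*x) * C"
      by (simp add: mult.assoc[symmetric] exp_add[symmetric])
    thus ?thesis by (simp add: algebra_simps)
  qed
  define G where "G x = \<gamma> x - (C * (1 - exp (-\<beta>*x))/\<beta> - k*x/\<beta>)" for x
  have Gc: "continuous_on {0..r} G" unfolding G_def
    using b by (intro continuous_intros gc) auto
  have Gd: "(G has_real_derivative 0) (at x)" if "0 < x" "x < r" for x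
  proof -
    have "(G has_real_derivative (\<gamma>' x - (C * (exp (-\<beta>*x) * \<beta>)/\<beta> - k/\<beta>))) (at x)"
      unfolding G_def by (auto intro!: derivative_eq_intros Dg[OF that])
    moreover have "\<gamma>' x - (C * (exp (-\<beta>*x) * \<beta>)/\<beta> - k/\<beta>) = 0"
      using p[of x] that b by simp
    ultimately show ?thesis by simp
  qed
  show ?thesis
  proof
    fix x assume x: "x \<in> {0..r}"
    have "G x = G 0" by (rule DERIV_isconst2[OF r_pos Gc Gd]) (use x in auto)
    thus "\<gamma>' x = (\<gamma>' 0 + k/\<beta>) * exp (-\<beta>*x) - k/\<beta>
     \<and> \<gamma> x = \<gamma> 0 + (\<gamma>' 0 + k/\<beta>) * (1 - exp (-\<beta>*x))/\<beta> - k*x/\<beta>"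
      using p[OF x] by (simp add: G_def C_def)
  qed
qed


lemma H_pos:
  fixes \<beta> t :: real
  assumes "\<beta> \<noteq> 0" "t > 0"
  shows "(exp (\<beta>*t) - 1)/\<beta> > 0"
proof (cases "\<beta> > 0")
  case True
  then have "exp (\<beta>*t) > 1" using assms by simp
  then show ?thesis using True by simp
next
  case False
  then have "\<beta> < 0" using assms by simp
  then have "exp (\<beta>*t) < 1" using assms by (simp add: mult_neg_pos)
  then show ?thesis using \<open>\<beta> < 0\<close> by (simp add: divide_neg_neg)
qed

lemma H_mono:
  fixes \<beta> t t' :: real
  assumes "\<beta> \<noteq> 0" "t \<le> t'"
  shows "(exp (\<beta>*t) - 1)/\<beta> \<le> (exp (\<beta>*t') - 1)/\<beta>"
proof (cases "\<beta> > 0")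
  case True
  then have "exp (\<beta>*t) \<le> exp (\<beta>*t')" using assms by simp
  then show ?thesis using True by (simp add: divide_right_mono)
next
  case False
  then have "\<beta> < 0" using assms by simp
  then have "exp (\<beta>*t') \<le> exp (\<beta>*t)" using assms by (simp add: mult_left_mono_neg)
  then show ?thesis using \<open>\<beta> < 0\<close> by (simp add: divide_right_mono_neg)
qed

lemma exp_one_minus: "exp (x::real) * (1 - x) \<le> 1"
proof -
  have "1 - x \<le> exp (-x)" using exp_ge_add_one_self[of "-x"] by simp
  hence "exp x * (1 - x) \<le> exp x * exp (-x)" by (simp add: mult_left_mono)
  thus ?thesis by (simp add: exp_minus_inverse)
qed

lemma main_nz:
  fixes \<beta> k r \<epsilon> C g0 :: real and \<gamma> :: "real \<Rightarrow> real"
  assumes b: "\<beta> \<noteq> 0" and eps_pos: "\<epsilon> > 0" and r_pos: "r > 0"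
    and g: "\<forall>x\<in>{0..r}. \<gamma> x = g0 + C * (1 - exp (-\<beta>*x))/\<beta> - k*x/\<beta>"
    and alt: "r \<ge> 2 * \<epsilon> \<or> C * exp (-\<beta>*r) - k/\<beta> = 0"
    and pos: "C * exp (-\<beta>*(r/2)) - k/\<beta> > 0"
  shows "a_plus \<epsilon> \<beta> * (\<gamma> (min \<epsilon> r) - \<gamma> 0)
           - a_minus \<epsilon> \<beta> * (\<gamma> (min (2 * \<epsilon>) r) - \<gamma> (min \<epsilon> r)) \<le> \<epsilon> * k"
proof -
  define F where "F x = g0 + C * (1 - exp (-\<beta>*x))/\<beta> - k*x/\<beta>" for x
  have gF: "\<gamma> x = F x" if "0 \<le> x" "x \<le> r" for x using g that by (auto simp: F_def)
  define u where "u = exp (\<beta>*\<epsilon>)"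
  have u0: "u > 0" by (simp add: u_def)
  have u1: "u \<noteq> 1" using b eps_pos by (simp add: u_def)
  have e1: "exp (-\<beta>*\<epsilon>) = 1/u" by (simp add: u_def exp_minus_inverse exp_minus field_simps)
  have e1': "exp (-\<epsilon>*\<beta>) = 1/u" using e1 by (simp add: mult.commute)
  have e2: "exp (-\<beta>*(2*\<epsilon>)) = 1/u^2"
  proof -
    have "exp (-\<beta>*(2*\<epsilon>)) = exp (-\<beta>*\<epsilon>) * exp (-\<beta>*\<epsilon>)" by (simp add: exp_add[symmetric])
    thus ?thesis using e1 by (simp add: power2_eq_square)
  qed
  have ap: "a_plus \<epsilon> \<beta> = \<beta>/(u-1)" using b by (simp add: a_plus_def u_def mult.commute)
  have am: "a_minus \<epsilon> \<beta> = \<beta>/(1 - 1/u)" using b e1' by (simp add: a_minus_def)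
  have iden: "a_plus \<epsilon> \<beta> * (F \<epsilon> - F 0) - a_minus \<epsilon> \<beta> * (F (2*\<epsilon>) - F \<epsilon>) = \<epsilon> * k"
  proof -
    have hA: "F \<epsilon> - F 0 = C*(1 - 1/u)/\<beta> - k*\<epsilon>/\<beta>" using e1 by (simp add: F_def)
    have hB: "F (2*\<epsilon>) - F \<epsilon> = C*(1/u - 1/u^2)/\<beta> - k*\<epsilon>/\<beta>" using e1 e2 u0 b
      by (simp add: F_def field_simps)
    have um: "u - 1 \<noteq> 0" using u1 by simp
    have am2: "1 - 1/u = (u - 1)/u" using u0 by (simp add: field_simps)
    have "\<beta>/(u-1) * (C*(1 - 1/u)/\<beta> - k*\<epsilon>/\<beta>) = C/u - k*\<epsilon>/(u-1)"
      unfolding am2 using u0 um b by (simp add: field_simps)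
    moreover have "\<beta>/((u-1)/u) * (C*(1/u - 1/u^2)/\<beta> - k*\<epsilon>/\<beta>) = C/u - k*\<epsilon>*u/(u-1)"
    proof -
      have "1 + u*u - u*2 = (u-1)*(u-1)" by (simp add: algebra_simps)
      hence sq: "1 + u*u - u*2 \<noteq> 0" using um by simp
      show ?thesis using u0 um b sq by (simp add: field_simps power2_eq_square)
    qed
    moreover have "k*\<epsilon>*u/(u-1) - k*\<epsilon>/(u-1) = \<epsilon> * k"
    proof -
      have "k*\<epsilon>*u/(u-1) - k*\<epsilon>/(u-1) = (k*\<epsilon>*u - k*\<epsilon>)/(u-1)" by (simp add: diff_divide_distrib)
      also have "\<dots> = (k*\<epsilon>)*(u-1)/(u-1)" by (simp add: algebra_simps)
      also have "\<dots> = \<epsilon> * k" using um by simp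
      finally show ?thesis .
    qed
    ultimately show ?thesis unfolding ap am hA hB am2 by linarith
  qed
  show ?thesis
  proof (cases "r \<ge> 2*\<epsilon>")
    case True
    then have "min \<epsilon> r = \<epsilon>" "min (2*\<epsilon>) r = 2*\<epsilon>" using eps_pos by auto
    then show ?thesis using iden gF[of \<epsilon>] gF[of "2*\<epsilon>"] gF[of 0] True eps_pos r_pos by simp
  next
    case False
    then have r2: "r < 2*\<epsilon>" and pr: "C * exp (-\<beta>*r) = k/\<beta>" using alt by auto
    have Cf: "C = k/\<beta> * exp (\<beta>*r)"
    proof -
      have e: "exp (-\<beta>*r) * exp (\<beta>*r) = 1" by (simp add: exp_add[symmetric])
      have "C = C * exp (-\<beta>*r) * exp (\<beta>*r)" using e by (simp only: mult.assoc)
      also have "\<dots> = k/\<beta> * exp (\<beta>*r)" using pr by simp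
      finally show ?thesis .
    qed
    have kpos: "k > 0"
    proof -
      have "C * exp (-\<beta>*(r/2)) = k/\<beta> * exp (\<beta>*(r/2))"
        unfolding Cf by (simp add: mult.assoc exp_add[symmetric])
      moreover have "k * ((exp (\<beta>*(r/2)) - 1)/\<beta>) = k/\<beta> * exp (\<beta>*(r/2)) - k/\<beta>"
        by (simp add: diff_divide_distrib algebra_simps)
      ultimately have "k * ((exp (\<beta>*(r/2)) - 1)/\<beta>) > 0" using pos by simp
      moreover have "(exp (\<beta>*(r/2)) - 1)/\<beta> > 0" using H_pos[OF b, of "r/2"] r_pos by simp
      moreover have "\<And>t::real. 0 < k*t \<Longrightarrow> 0 < t \<Longrightarrow> 0 < k" by (simp add: zero_less_mult_iff)
      ultimately show ?thesis by blast
    qed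
    have He: "(exp (\<beta>*\<epsilon>) - 1)/\<beta> > 0" using H_pos[OF b eps_pos] .
    show ?thesis
    proof (cases "r \<le> \<epsilon>")
      case True
      then have m: "min \<epsilon> r = r" "min (2*\<epsilon>) r = r" using eps_pos by auto
      define Hr where "Hr = (exp (\<beta>*r) - 1)/\<beta>"
      define Hep where "Hep = (exp (\<beta>*\<epsilon>) - 1)/\<beta>"
      have Hr0: "Hr > 0" unfolding Hr_def using H_pos[OF b r_pos] .
      have HrHe: "Hr \<le> Hep" unfolding Hr_def Hep_def using H_mono[OF b True] .
      have apH: "a_plus \<epsilon> \<beta> = 1/Hep" using b by (simp add: a_plus_def Hep_def mult.commute)
      have Fr: "F r - F 0 = k * ((Hr - r)/\<beta>)"
      proof -
        have "C * (1 - exp (-\<beta>*r)) = C - C * exp (-\<beta>*r)" by (simp add: algebra_simps)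
        also have "\<dots> = k/\<beta> * exp (\<beta>*r) - k/\<beta>" using pr Cf by simp
        finally have c1: "C * (1 - exp (-\<beta>*r)) = k/\<beta> * exp (\<beta>*r) - k/\<beta>" .
        have "F r - F 0 = C * (1 - exp (-\<beta>*r))/\<beta> - k*r/\<beta>" by (simp add: F_def)
        also have "\<dots> = (k/\<beta> * exp (\<beta>*r) - k/\<beta>)/\<beta> - k*r/\<beta>" unfolding c1 ..
        finally have eq: "F r - F 0 = (k/\<beta> * exp (\<beta>*r) - k/\<beta>)/\<beta> - k*r/\<beta>" .
        show ?thesis unfolding eq Hr_def using b by (simp add: field_simps)
      qed
      have key1: "(Hr - r)/\<beta> \<le> r * Hr"
      proof -
        have "exp (\<beta>*r) * (1 - \<beta>*r) \<le> 1" by (rule exp_one_minus)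
        hence "exp (\<beta>*r) - 1 - \<beta>*r \<le> (\<beta>*r) * (exp (\<beta>*r) - 1)" by (simp add: algebra_simps)
        hence "(exp (\<beta>*r) - 1 - \<beta>*r)/\<beta>^2 \<le> (\<beta>*r) * (exp (\<beta>*r) - 1)/\<beta>^2"
          using b by (simp add: divide_right_mono)
        moreover have "(Hr - r)/\<beta> = (exp (\<beta>*r) - 1 - \<beta>*r)/\<beta>^2"
          unfolding Hr_def using b by (simp add: power2_eq_square field_simps)
        moreover have "r * Hr = (\<beta>*r) * (exp (\<beta>*r) - 1)/\<beta>^2"
          unfolding Hr_def using b by (simp add: power2_eq_square field_simps)
        ultimately show ?thesis by simp
      qed
      have key2: "r * Hr \<le> \<epsilon> * Hep" using True HrHe Hr0 r_pos by (simp add: mult_mono)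
      have "a_plus \<epsilon> \<beta> * (\<gamma> r - \<gamma> 0) = k * ((Hr - r)/\<beta>) / Hep"
        using gF[of r] gF[of 0] r_pos Fr apH by simp
      also have "\<dots> \<le> k * (\<epsilon> * Hep) / Hep"
      proof -
        have A: "k * ((Hr - r)/\<beta>) \<le> k * (\<epsilon> * Hep)"
          using key1 key2 kpos by (intro mult_left_mono) auto
        have B: "Hep > 0" using He Hep_def by simp
        show ?thesis by (rule divide_right_mono[OF A]) (use B in simp)
      qed
      also have "\<dots> = \<epsilon> * k" using He b unfolding Hep_def by simp
      finally show ?thesis using m by simp
    next
      case False
      then have m: "min \<epsilon> r = \<epsilon>" "min (2*\<epsilon>) r = r" using r2 by auto
      define d where "d = 2*\<epsilon> - r"
      have d0: "d > 0" using r2 by (simp add: d_def)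
      have amp: "a_minus \<epsilon> \<beta> > 0"
      proof -
        have um: "u - 1 \<noteq> 0" using u1 by simp
        have "a_minus \<epsilon> \<beta> = u / ((u-1)/\<beta>)" unfolding am using u0 um b by (simp add: field_simps)
        moreover have "u / ((u-1)/\<beta>) > 0" proof -
          have He': "(u-1)/\<beta> > 0" using He unfolding u_def .
          show ?thesis using divide_pos_pos[OF u0 He'] .
        qed
        ultimately show ?thesis by simp
      qed
      have Fd: "F (2*\<epsilon>) - F r = k/\<beta>^2 * (1 - exp (-\<beta>*d) - \<beta>*d)"
      proof -
        have e: "exp (-\<beta>*(2*\<epsilon>)) = exp (-\<beta>*r) * exp (-\<beta>*d)"
          by (simp add: exp_add[symmetric] d_def algebra_simps)
        have "C * exp (-\<beta>*(2*\<epsilon>)) = (C * exp (-\<beta>*r)) * exp (-\<beta>*d)"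
          by (simp only: e mult.assoc)
        also have "\<dots> = k/\<beta> * exp (-\<beta>*d)" by (simp only: pr)
        finally have c2: "C * exp (-\<beta>*(2*\<epsilon>)) = k/\<beta> * exp (-\<beta>*d)" .
        have f1: "C*(1-exp(-\<beta>*(2*\<epsilon>))) = C - k/\<beta>*exp(-\<beta>*d)"
          by (simp only: right_diff_distrib mult_1_right c2)
        have f2: "C*(1-exp(-\<beta>*r)) = C - k/\<beta>" by (simp only: right_diff_distrib mult_1_right pr)
        have de: "2*\<epsilon> = d + r" by (simp add: d_def)
        have "F (2*\<epsilon>) - F r = C*(1-exp(-\<beta>*(2*\<epsilon>)))/\<beta> - k*(2*\<epsilon>)/\<beta> - (C*(1-exp(-\<beta>*r))/\<beta> - k*r/\<beta>)"
          unfolding F_def by simp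
        also have "\<dots> = (C - k/\<beta>*exp(-\<beta>*d))/\<beta> - k*(d+r)/\<beta> - ((C - k/\<beta>)/\<beta> - k*r/\<beta>)"
          unfolding f1 f2 by (simp only: de)
        also have "\<dots> = k/\<beta>^2 * (1 - exp (-\<beta>*d) - \<beta>*d)"
          using b by (simp add: field_simps power2_eq_square)
        finally show ?thesis .
      qed
      have "1 - exp (-\<beta>*d) - \<beta>*d \<le> 0" using exp_ge_add_one_self[of "-\<beta>*d"] by simp
      moreover have "k/\<beta>^2 \<ge> 0" using kpos by simp
      ultimately have "F (2*\<epsilon>) - F r \<le> 0" unfolding Fd
        by (rule mult_nonneg_nonpos[rotated])
      hence "a_minus \<epsilon> \<beta> * (F (2*\<epsilon>) - F r) \<le> 0" using amp by (intro mult_nonneg_nonpos) auto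
      moreover have "a_plus \<epsilon> \<beta> * (F \<epsilon> - F 0) - a_minus \<epsilon> \<beta> * (F r - F \<epsilon>)
          = \<epsilon> * k + a_minus \<epsilon> \<beta> * (F (2*\<epsilon>) - F r)" using iden by (simp add: algebra_simps)
      ultimately show ?thesis using m gF[of \<epsilon>] gF[of r] gF[of 0] False eps_pos r_pos by simp
    qed
  qed
qed


lemma lemma3p2_sol0:
  fixes k r :: real
    and \<gamma> \<gamma>' \<gamma>'' :: "real \<Rightarrow> real"
  assumes r_pos: "r > 0"
    and d1: "\<And>x. x \<in> {0..r} \<Longrightarrow> (\<gamma> has_real_derivative \<gamma>' x) (at x within {0..r})"
    and d2: "\<And>x. x \<in> {0..r} \<Longrightarrow> (\<gamma>' has_real_derivative \<gamma>'' x) (at x within {0..r})"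
    and ode: "\<And>x. x \<in> {0<..<r} \<Longrightarrow> - \<gamma>'' x - 0 * \<bar>\<gamma>' x\<bar> = k"
  shows "\<forall>x\<in>{0..r}. \<gamma>' x = \<gamma>' 0 - k*x \<and> \<gamma> x = \<gamma> 0 + \<gamma>' 0 * x - k*x^2/2"
proof -
  define C where "C = \<gamma>' 0"
  have g'c: "continuous_on {0..r} \<gamma>'" by (rule DERIV_continuous_on[OF d2])
  have gc: "continuous_on {0..r} \<gamma>" by (rule DERIV_continuous_on[OF d1])
  have Dg': "(\<gamma>' has_real_derivative \<gamma>'' x) (at x)" if "0 < x" "x < r" for x
    using d2[of x] that at_within_Icc_at[of 0 x r] by auto
  have Dg: "(\<gamma> has_real_derivative \<gamma>' x) (at x)" if "0 < x" "x < r" for x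
    using d1[of x] that at_within_Icc_at[of 0 x r] by auto
  have ode': "\<gamma>'' x = -k" if "0 < x" "x < r" for x
    using ode[of x] that by auto
  define w where "w x = \<gamma>' x + k*x" for x
  have wc: "continuous_on {0..r} w" unfolding w_def
    by (intro continuous_intros g'c)
  have wd: "(w has_real_derivative 0) (at x)" if "0 < x" "x < r" for x
  proof -
    have "(w has_real_derivative (\<gamma>'' x + k)) (at x)"
      unfolding w_def by (auto intro!: derivative_eq_intros Dg'[OF that])
    thus ?thesis using ode'[OF that] by simp
  qed
  have p: "\<gamma>' x = C - k*x" if "x \<in> {0..r}" for x
  proof -
    have "w x = w 0" by (rule DERIV_isconst2[OF r_pos wc wd]) (use that in auto)
    thus ?thesis by (simp add: w_def C_def)
  qed
  define G where "G x = \<gamma> x - (C*x - k*x^2/2)" for x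
  have Gc: "continuous_on {0..r} G" unfolding G_def
    by (intro continuous_intros gc) auto
  have Gd: "(G has_real_derivative 0) (at x)" if "0 < x" "x < r" for x
  proof -
    have "(G has_real_derivative (\<gamma>' x - (C - k*(2*x)/2))) (at x)"
      unfolding G_def by (auto intro!: derivative_eq_intros Dg[OF that])
    moreover have "\<gamma>' x - (C - k*(2*x)/2) = 0"
      using p[of x] that by simp
    ultimately show ?thesis by simp
  qed
  show ?thesis
  proof
    fix x assume x: "x \<in> {0..r}"
    have "G x = G 0" by (rule DERIV_isconst2[OF r_pos Gc Gd]) (use x in auto)
    thus "\<gamma>' x = \<gamma>' 0 - k*x \<and> \<gamma> x = \<gamma> 0 + \<gamma>' 0 * x - k*x^2/2"
      using p[OF x] by (simp add: G_def C_def)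
  qed
qed

lemma main_z:
  fixes k r \<epsilon> C g0 :: real and \<gamma> :: "real \<Rightarrow> real"
  assumes eps_pos: "\<epsilon> > 0" and r_pos: "r > 0"
    and g: "\<forall>x\<in>{0..r}. \<gamma> x = g0 + C*x - k*x^2/2"
    and alt: "r \<ge> 2 * \<epsilon> \<or> C - k*r = 0"
    and pos: "C - k*(r/2) > 0"
  shows "a_plus \<epsilon> 0 * (\<gamma> (min \<epsilon> r) - \<gamma> 0)
           - a_minus \<epsilon> 0 * (\<gamma> (min (2 * \<epsilon>) r) - \<gamma> (min \<epsilon> r)) \<le> \<epsilon> * k"
proof -
  define F where "F x = g0 + C*x - k*x^2/2" for x
  have gF: "\<gamma> x = F x" if "0 \<le> x" "x \<le> r" for x using g that by (auto simp: F_def)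
  have ap: "a_plus \<epsilon> 0 = 1/\<epsilon>" "a_minus \<epsilon> 0 = 1/\<epsilon>" by (simp_all add: a_plus_def a_minus_def)
  show ?thesis
  proof (cases "r \<ge> 2*\<epsilon>")
    case True
    then have "min \<epsilon> r = \<epsilon>" "min (2*\<epsilon>) r = 2*\<epsilon>" using eps_pos by auto
    moreover have "1/\<epsilon> * (F \<epsilon> - F 0) - 1/\<epsilon> * (F (2*\<epsilon>) - F \<epsilon>) = \<epsilon> * k"
      using eps_pos by (simp add: F_def field_simps power2_eq_square)
    ultimately show ?thesis using ap gF[of \<epsilon>] gF[of "2*\<epsilon>"] gF[of 0] True eps_pos r_pos by simp
  next
    case False
    then have r2: "r < 2*\<epsilon>" and Cr: "C = k*r" using alt by auto
    have kpos: "k > 0" using pos r_pos unfolding Cr by (simp add: zero_less_mult_iff)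
    show ?thesis
    proof (cases "r \<le> \<epsilon>")
      case True
      then have m: "min \<epsilon> r = r" "min (2*\<epsilon>) r = r" using eps_pos by auto
      have "r^2 \<le> \<epsilon>^2" using True r_pos by (intro power_mono) auto
      moreover have "\<epsilon>^2 \<ge> 0" by simp
      ultimately have "r^2 \<le> 2*\<epsilon>^2" by linarith
      hence "k * r^2 \<le> k * (2*\<epsilon>^2)" using kpos by (intro mult_left_mono) auto
      moreover have "1/\<epsilon> * (F r - F 0) = k * r^2 / (2*\<epsilon>)"
        using eps_pos unfolding F_def Cr by (simp add: field_simps power2_eq_square)
      moreover have "k * r^2 / (2*\<epsilon>) \<le> \<epsilon> * k"
        using calculation(1) eps_pos by (simp add: field_simps power2_eq_square)
      ultimately show ?thesis using m ap gF[of r] gF[of 0] r_pos by simp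
    next
      case False
      then have m: "min \<epsilon> r = \<epsilon>" "min (2*\<epsilon>) r = r" using r2 by auto
      have "1/\<epsilon> * (F \<epsilon> - F 0) - 1/\<epsilon> * (F r - F \<epsilon>) = \<epsilon> * k - k * (r - 2*\<epsilon>)^2 / (2*\<epsilon>)"
        using eps_pos unfolding F_def Cr by (simp add: field_simps power2_eq_square)
      moreover have "k * (r - 2*\<epsilon>)^2 / (2*\<epsilon>) \<ge> 0" using kpos eps_pos by simp
      ultimately show ?thesis using m ap gF[of \<epsilon>] gF[of r] gF[of 0] False eps_pos r_pos by simp
    qed
  qed
qed

theorem lemma3p2:
  fixes \<beta> k r \<epsilon> :: real
    and \<gamma> \<gamma>' \<gamma>'' :: "real \<Rightarrow> real"
  assumes r_pos: "r > 0"
    and d1: "\<And>x. x \<in> {0..r} \<Longrightarrow> (\<gamma> has_real_derivative \<gamma>' x) (at x within {0..r})"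
    and d2: "\<And>x. x \<in> {0..r} \<Longrightarrow> (\<gamma>' has_real_derivative \<gamma>'' x) (at x within {0..r})"
    and cont2: "continuous_on {0..r} \<gamma>''"
    and ode: "\<And>x. x \<in> {0<..<r} \<Longrightarrow> - \<gamma>'' x - \<beta> * \<bar>\<gamma>' x\<bar> = k"
    and incr: "\<And>x. x \<in> {0<..<r} \<Longrightarrow> \<gamma>' x > 0"
    and eps_pos: "\<epsilon> > 0"
    and alt: "r \<ge> 2 * \<epsilon> \<or> \<gamma>' r = 0"
  shows "a_plus \<epsilon> \<beta> * (\<gamma> (min \<epsilon> r) - \<gamma> 0)
           - a_minus \<epsilon> \<beta> * (\<gamma> (min (2 * \<epsilon>) r) - \<gamma> (min \<epsilon> r)) \<le> \<epsilon> * k"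
proof (cases "\<beta> = 0")
  case True
  have sol: "\<forall>x\<in>{0..r}. \<gamma>' x = \<gamma>' 0 - k*x \<and> \<gamma> x = \<gamma> 0 + \<gamma>' 0 * x - k*x^2/2"
    by (rule lemma3p2_sol0[OF r_pos d1 d2]) (use ode True in auto)
  have hr: "r \<in> {0..r}" "r/2 \<in> {0..r}" "r/2 \<in> {0<..<r}" using r_pos by auto
  show ?thesis unfolding True
  proof (rule main_z[OF eps_pos r_pos])
    show "\<forall>x\<in>{0..r}. \<gamma> x = \<gamma> 0 + \<gamma>' 0 * x - k*x^2/2" using sol by blast
    have a: "\<gamma>' r = \<gamma>' 0 - k*r" using bspec[OF sol hr(1)] by blast
    have b: "\<gamma>' (r/2) = \<gamma>' 0 - k*(r/2)" using bspec[OF sol hr(2)] by blast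
    show "r \<ge> 2 * \<epsilon> \<or> \<gamma>' 0 - k*r = 0" using alt a by simp
    show "\<gamma>' 0 - k*(r/2) > 0" using b incr[OF hr(3)] by simp
  qed
next
  case False
  have sol: "\<forall>x\<in>{0..r}. \<gamma>' x = (\<gamma>' 0 + k/\<beta>) * exp (-\<beta>*x) - k/\<beta>
     \<and> \<gamma> x = \<gamma> 0 + (\<gamma>' 0 + k/\<beta>) * (1 - exp (-\<beta>*x))/\<beta> - k*x/\<beta>"
    by (rule lemma3p2_sol[OF r_pos d1 d2 ode incr False])
  have hr: "r \<in> {0..r}" "r/2 \<in> {0..r}" "r/2 \<in> {0<..<r}" using r_pos by auto
  show ?thesis
  proof (rule main_nz[OF False eps_pos r_pos])
    show "\<forall>x\<in>{0..r}. \<gamma> x = \<gamma> 0 + (\<gamma>' 0 + k/\<beta>) * (1 - exp (-\<beta>*x))/\<beta> - k*x/\<beta>" using sol by blast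
    have a: "\<gamma>' r = (\<gamma>' 0 + k/\<beta>) * exp (-\<beta>*r) - k/\<beta>" using bspec[OF sol hr(1)] by blast
    have b: "\<gamma>' (r/2) = (\<gamma>' 0 + k/\<beta>) * exp (-\<beta>*(r/2)) - k/\<beta>" using bspec[OF sol hr(2)] by blast
    show "r \<ge> 2 * \<epsilon> \<or> (\<gamma>' 0 + k/\<beta>) * exp (-\<beta>*r) - k/\<beta> = 0" using alt a by (simp only:)
    show "(\<gamma>' 0 + k/\<beta>) * exp (-\<beta>*(r/2)) - k/\<beta> > 0" using b incr[OF hr(3)] by (simp only:)
  qed
qed

end
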